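(* Let $C$ be a cofibrant object of a P-category $(\mathcal{C},P,\mathcal{F},\mathcal{W})$ and let $v:A\to B$ be a trivial fibration. Let $f_0,f_1:C\to A$ and let $h:C\to P(B)$ satisfy $(\delta^0_B,\delta^1_B)h=(vf_0,vf_1)$ (i.e. $h$ is a homotopy from $vf_0$ to $vf_1$). Then there exists $\widetilde h:C\to P(A)$ with $(\delta^0_A,\delta^1_A)\widetilde h=(f_0,f_1)$ and $P(v)\widetilde h=h$; that is, $h$ lifts to a homotopy $\widetilde h:f_0\simeq f_1$ with $P(v)\widetilde h=h$.
   Context: Let $\mathcal{C}$ have finite products and a final object $e$. A functorial path is a functor $P$ with natural transformations $\iota:1\to P$, $\delta^0,\delta^1:P\to1$, $\delta^0\iota=\delta^1\iota=1$; a homotopy $h:f\simeq g$ is $h:A\to P(B)$ with $\delta^0h=f$, $\delta^1h=g$. The path is equipped with a symmetry $\tau$ ($\tau\tau=1$, $\tau\iota=\iota$, $\delta^k\tau=\delta^{1-k}$), a coproduct $c:P\to P^2$ ($c_{P(A)}c_A=P(c_A)c_A$, $\delta^1_{P(A)}c_A=P(\delta^1_A)c_A=1$, $c_A\iota_A=\iota_{P(A)}\iota_A$, $\delta^0_{P(A)}c_A=P(\delta^0_A)c_A=\iota_A\delta^0_A$), an interchange $\mu$ (natural automorphism of $P^2$, $\delta^k_{P(A)}\mu_A=P(\delta^k_A)$, $P(\delta^k_A)\mu_A=\delta^k_{P(A)}$) and a folding map $\nabla:P^2\to P$ ($\delta^k\nabla=\delta^k\delta^k_P$, $\nabla\iota_P=1$).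 A P-category has classes $\mathcal{F}$ (fibrations), $\mathcal{W}$ (weak equivalences); trivial fibrations are morphisms in both; axioms: (P$_1$) both contain isomorphisms and are closed under composition, $\mathcal{W}$ 2-out-of-3, each $A\to e$ a fibration; (P$_2$) $\iota_A\in\mathcal{W}$, $(\delta^0_A,\delta^1_A)\in\mathcal{F}$, $\delta^0_A,\delta^1_A$ trivial fibrations; (P$_3$) for $u:A\to C$ and a fibration $v:B\to C$, $A\times_CB$ exists, $\pi_1$ is a fibration, trivial if $v$ is, and $\pi_2\in\mathcal{W}$ if $u\in\mathcal{W}$; (P$_4$) $P$ preserves fibrations, weak equivalences and fibre products; (P$_5$) for each fibration $v:A\to B$, $((\delta^0_A,\delta^1_A),P(v)):P(A)\to(A\times A)\times_{B\times B}P(B)$ is a fibration. An object $C$ is cofibrant if for every trivial fibration $w:X\to Y$ and every $f:C\to Y$ there is $g:C\to X$ with $wg=f$. *)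

theory Defs
  imports Main
begin

text \<open>A category is represented with every element of type 'a being a morphism
and every element of type 'o an object.\<close>

record ('o, 'a) pcat =
  cdom  :: "'a \<Rightarrow> 'o"
  ccod  :: "'a \<Rightarrow> 'o"
  ccomp :: "'a \<Rightarrow> 'a \<Rightarrow> 'a"   (* ccomp g f = g o f *)
  cid   :: "'o \<Rightarrow> 'a"
  cprod :: "'o \<Rightarrow> 'o \<Rightarrow> 'o"
  cpr1  :: "'o \<Rightarrow> 'o \<Rightarrow> 'a"
  cpr2  :: "'o \<Rightarrow> 'o \<Rightarrow> 'a"
  cterm :: "'o"
  Po    :: "'o \<Rightarrow> 'o"
  Pa    :: "'a \<Rightarrow> 'a"
  iota  :: "'o \<Rightarrow> 'a"
  d0    :: "'o \<Rightarrow> 'a"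
  d1    :: "'o \<Rightarrow> 'a"
  tau   :: "'o \<Rightarrow> 'a"
  cop   :: "'o \<Rightarrow> 'a"
  mu    :: "'o \<Rightarrow> 'a"
  nabla :: "'o \<Rightarrow> 'a"
  fib   :: "'a set"
  we    :: "'a set"

definition hom :: "('o,'a) pcat \<Rightarrow> 'a \<Rightarrow> 'o \<Rightarrow> 'o \<Rightarrow> bool" where
  "hom C f X Y \<longleftrightarrow> cdom C f = X \<and> ccod C f = Y"

definition is_iso :: "('o,'a) pcat \<Rightarrow> 'a \<Rightarrow> bool" where
  "is_iso C f \<longleftrightarrow> (\<exists>g. hom C g (ccod C f) (cdom C f) \<and>
      ccomp C g f = cid C (cdom C f) \<and> ccomp C f g = cid C (ccod C f))"

definition is_category :: "('o,'a) pcat \<Rightarrow> bool" where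
  "is_category C \<longleftrightarrow>
     (\<forall>X. hom C (cid C X) X X) \<and>
     (\<forall>f g. cdom C g = ccod C f \<longrightarrow> hom C (ccomp C g f) (cdom C f) (ccod C g)) \<and>
     (\<forall>f. ccomp C f (cid C (cdom C f)) = f \<and> ccomp C (cid C (ccod C f)) f = f) \<and>
     (\<forall>f g h. cdom C g = ccod C f \<longrightarrow> cdom C h = ccod C g \<longrightarrow>
         ccomp C h (ccomp C g f) = ccomp C (ccomp C h g) f)"

definition has_products :: "('o,'a) pcat \<Rightarrow> bool" where
  "has_products C \<longleftrightarrow>
     (\<forall>A B. hom C (cpr1 C A B) (cprod C A B) A \<and> hom C (cpr2 C A B) (cprod C A B) B \<and>
        (\<forall>W f g. hom C f W A \<longrightarrow> hom C g W B \<longrightarrow>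
           (\<exists>!h. hom C h W (cprod C A B) \<and> ccomp C (cpr1 C A B) h = f \<and> ccomp C (cpr2 C A B) h = g))) \<and>
     (\<forall>A. \<exists>!t. hom C t A (cterm C))"

definition pair :: "('o,'a) pcat \<Rightarrow> 'a \<Rightarrow> 'a \<Rightarrow> 'a" where
  "pair C f g = (THE h. hom C h (cdom C f) (cprod C (ccod C f) (ccod C g)) \<and>
       ccomp C (cpr1 C (ccod C f) (ccod C g)) h = f \<and> ccomp C (cpr2 C (ccod C f) (ccod C g)) h = g)"

definition prodmap :: "('o,'a) pcat \<Rightarrow> 'a \<Rightarrow> 'a \<Rightarrow> 'a" where
  "prodmap C f g = pair C (ccomp C f (cpr1 C (cdom C f) (cdom C g)))
                          (ccomp C g (cpr2 C (cdom C f) (cdom C g)))"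

definition to_term :: "('o,'a) pcat \<Rightarrow> 'o \<Rightarrow> 'a" where
  "to_term C A = (THE t. hom C t A (cterm C))"

definition is_pullback :: "('o,'a) pcat \<Rightarrow> 'a \<Rightarrow> 'a \<Rightarrow> 'o \<Rightarrow> 'a \<Rightarrow> 'a \<Rightarrow> bool" where
  "is_pullback C u v Q q1 q2 \<longleftrightarrow>
     ccod C u = ccod C v \<and> hom C q1 Q (cdom C u) \<and> hom C q2 Q (cdom C v) \<and>
     ccomp C u q1 = ccomp C v q2 \<and>
     (\<forall>W a b. hom C a W (cdom C u) \<longrightarrow> hom C b W (cdom C v) \<longrightarrow> ccomp C u a = ccomp C v b \<longrightarrow>
        (\<exists>!k. hom C k W Q \<and> ccomp C q1 k = a \<and> ccomp C q2 k = b))"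

definition is_functor_P :: "('o,'a) pcat \<Rightarrow> bool" where
  "is_functor_P C \<longleftrightarrow>
     (\<forall>f. hom C (Pa C f) (Po C (cdom C f)) (Po C (ccod C f))) \<and>
     (\<forall>X. Pa C (cid C X) = cid C (Po C X)) \<and>
     (\<forall>f g. cdom C g = ccod C f \<longrightarrow> Pa C (ccomp C g f) = ccomp C (Pa C g) (Pa C f))"

definition functorial_path :: "('o,'a) pcat \<Rightarrow> bool" where
  "functorial_path C \<longleftrightarrow> is_functor_P C \<and>
     (\<forall>A. hom C (iota C A) A (Po C A) \<and> hom C (d0 C A) (Po C A) A \<and> hom C (d1 C A) (Po C A) A) \<and>
     (\<forall>f. ccomp C (Pa C f) (iota C (cdom C f)) = ccomp C (iota C (ccod C f)) f) \<and>
     (\<forall>f. ccomp C (d0 C (ccod C f)) (Pa C f) = ccomp C f (d0 C (cdom C f))) \<and>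
     (\<forall>f. ccomp C (d1 C (ccod C f)) (Pa C f) = ccomp C f (d1 C (cdom C f))) \<and>
     (\<forall>A. ccomp C (d0 C A) (iota C A) = cid C A \<and> ccomp C (d1 C A) (iota C A) = cid C A)"

definition has_symmetry :: "('o,'a) pcat \<Rightarrow> bool" where
  "has_symmetry C \<longleftrightarrow>
     (\<forall>A. hom C (tau C A) (Po C A) (Po C A)) \<and>
     (\<forall>f. ccomp C (Pa C f) (tau C (cdom C f)) = ccomp C (tau C (ccod C f)) (Pa C f)) \<and>
     (\<forall>A. ccomp C (tau C A) (tau C A) = cid C (Po C A) \<and>
          ccomp C (tau C A) (iota C A) = iota C A \<and>
          ccomp C (d0 C A) (tau C A) = d1 C A \<and> ccomp C (d1 C A) (tau C A) = d0 C A)"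

definition has_coproduct :: "('o,'a) pcat \<Rightarrow> bool" where
  "has_coproduct C \<longleftrightarrow>
     (\<forall>A. hom C (cop C A) (Po C A) (Po C (Po C A))) \<and>
     (\<forall>f. ccomp C (Pa C (Pa C f)) (cop C (cdom C f)) = ccomp C (cop C (ccod C f)) (Pa C f)) \<and>
     (\<forall>A. ccomp C (cop C (Po C A)) (cop C A) = ccomp C (Pa C (cop C A)) (cop C A) \<and>
          ccomp C (d1 C (Po C A)) (cop C A) = cid C (Po C A) \<and>
          ccomp C (Pa C (d1 C A)) (cop C A) = cid C (Po C A) \<and>
          ccomp C (cop C A) (iota C A) = ccomp C (iota C (Po C A)) (iota C A) \<and>
          ccomp C (d0 C (Po C A)) (cop C A) = ccomp C (iota C A) (d0 C A) \<and>
          ccomp C (Pa C (d0 C A)) (cop C A) = ccomp C (iota C A) (d0 C A))"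

definition has_interchange :: "('o,'a) pcat \<Rightarrow> bool" where
  "has_interchange C \<longleftrightarrow>
     (\<forall>A. hom C (mu C A) (Po C (Po C A)) (Po C (Po C A)) \<and> is_iso C (mu C A)) \<and>
     (\<forall>f. ccomp C (Pa C (Pa C f)) (mu C (cdom C f)) = ccomp C (mu C (ccod C f)) (Pa C (Pa C f))) \<and>
     (\<forall>A. ccomp C (d0 C (Po C A)) (mu C A) = Pa C (d0 C A) \<and>
          ccomp C (d1 C (Po C A)) (mu C A) = Pa C (d1 C A) \<and>
          ccomp C (Pa C (d0 C A)) (mu C A) = d0 C (Po C A) \<and>
          ccomp C (Pa C (d1 C A)) (mu C A) = d1 C (Po C A))"

definition has_folding :: "('o,'a) pcat \<Rightarrow> bool" where
  "has_folding C \<longleftrightarrow>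
     (\<forall>A. hom C (nabla C A) (Po C (Po C A)) (Po C A)) \<and>
     (\<forall>f. ccomp C (Pa C f) (nabla C (cdom C f)) = ccomp C (nabla C (ccod C f)) (Pa C (Pa C f))) \<and>
     (\<forall>A. ccomp C (d0 C A) (nabla C A) = ccomp C (d0 C A) (d0 C (Po C A)) \<and>
          ccomp C (d1 C A) (nabla C A) = ccomp C (d1 C A) (d1 C (Po C A)) \<and>
          ccomp C (nabla C A) (iota C (Po C A)) = cid C (Po C A))"

definition trivfib :: "('o,'a) pcat \<Rightarrow> 'a set" where
  "trivfib C = fib C \<inter> we C"

definition P_category :: "('o,'a) pcat \<Rightarrow> bool" where
  "P_category C \<longleftrightarrow>
     is_category C \<and> has_products C \<and> functorial_path C \<and> has_symmetry C \<and>
     has_coproduct C \<and> has_interchange C \<and> has_folding C \<and>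
     \<comment> \<open>(P1)\<close>
     (\<forall>f. is_iso C f \<longrightarrow> f \<in> fib C \<and> f \<in> we C) \<and>
     (\<forall>f g. cdom C g = ccod C f \<longrightarrow> f \<in> fib C \<longrightarrow> g \<in> fib C \<longrightarrow> ccomp C g f \<in> fib C) \<and>
     (\<forall>f g. cdom C g = ccod C f \<longrightarrow> f \<in> we C \<longrightarrow> g \<in> we C \<longrightarrow> ccomp C g f \<in> we C) \<and>
     (\<forall>f g. cdom C g = ccod C f \<longrightarrow> f \<in> we C \<longrightarrow> ccomp C g f \<in> we C \<longrightarrow> g \<in> we C) \<and>
     (\<forall>f g. cdom C g = ccod C f \<longrightarrow> g \<in> we C \<longrightarrow> ccomp C g f \<in> we C \<longrightarrow> f \<in> we C) \<and>
     (\<forall>A. to_term C A \<in> fib C) \<and>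
     \<comment> \<open>(P2)\<close>
     (\<forall>A. iota C A \<in> we C \<and> pair C (d0 C A) (d1 C A) \<in> fib C \<and>
          d0 C A \<in> trivfib C \<and> d1 C A \<in> trivfib C) \<and>
     \<comment> \<open>(P3)\<close>
     (\<forall>u v. ccod C u = ccod C v \<longrightarrow> v \<in> fib C \<longrightarrow>
        (\<exists>Q q1 q2. is_pullback C u v Q q1 q2 \<and> q1 \<in> fib C \<and>
           (v \<in> trivfib C \<longrightarrow> q1 \<in> trivfib C) \<and> (u \<in> we C \<longrightarrow> q2 \<in> we C))) \<and>
     \<comment> \<open>(P4)\<close>
     (\<forall>f. f \<in> fib C \<longrightarrow> Pa C f \<in> fib C) \<and>
     (\<forall>f. f \<in> we C \<longrightarrow> Pa C f \<in> we C) \<and>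
     (\<forall>u v Q q1 q2. v \<in> fib C \<longrightarrow> is_pullback C u v Q q1 q2 \<longrightarrow>
        is_pullback C (Pa C u) (Pa C v) (Po C Q) (Pa C q1) (Pa C q2)) \<and>
     \<comment> \<open>(P5)\<close>
     (\<forall>v. v \<in> fib C \<longrightarrow>
        (\<forall>Q q1 q2 k. is_pullback C (prodmap C v v) (pair C (d0 C (ccod C v)) (d1 C (ccod C v))) Q q1 q2 \<longrightarrow>
           hom C k (Po C (cdom C v)) Q \<longrightarrow>
           ccomp C q1 k = pair C (d0 C (cdom C v)) (d1 C (cdom C v)) \<longrightarrow>
           ccomp C q2 k = Pa C v \<longrightarrow> k \<in> fib C))"

definition cofibrant :: "('o,'a) pcat \<Rightarrow> 'o \<Rightarrow> bool" where
  "cofibrant C X \<longleftrightarrow>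
     (\<forall>w f. w \<in> trivfib C \<longrightarrow> hom C f X (ccod C w) \<longrightarrow>
        (\<exists>g. hom C g X (cdom C w) \<and> ccomp C w g = f))"

end

theory Submission
  imports Defs
begin

lemma cat_id: "is_category C \<Longrightarrow> hom C (cid C X) X X"
  unfolding is_category_def by blast

lemma cat_comp: "is_category C \<Longrightarrow> hom C f X Y \<Longrightarrow> hom C g Y Z \<Longrightarrow> hom C (ccomp C g f) X Z"
  unfolding is_category_def hom_def by metis

lemma cat_idl: "is_category C \<Longrightarrow> hom C f X Y \<Longrightarrow> ccomp C (cid C Y) f = f"
  unfolding is_category_def hom_def by metis

lemma cat_idr: "is_category C \<Longrightarrow> hom C f X Y \<Longrightarrow> ccomp C f (cid C X) = f"
  unfolding is_category_def hom_def by metis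

lemma cat_assoc: "is_category C \<Longrightarrow> hom C f X Y \<Longrightarrow> hom C g Y Z \<Longrightarrow> hom C k Z W \<Longrightarrow>
   ccomp C k (ccomp C g f) = ccomp C (ccomp C k g) f"
  unfolding is_category_def hom_def by metis

lemma pair_spec:
  assumes "has_products C" "hom C f W A" "hom C g W B"
  shows "hom C (pair C f g) W (cprod C A B) \<and> ccomp C (cpr1 C A B) (pair C f g) = f
         \<and> ccomp C (cpr2 C A B) (pair C f g) = g"
proof -
  have ex: "\<exists>!h. hom C h W (cprod C A B) \<and> ccomp C (cpr1 C A B) h = f \<and> ccomp C (cpr2 C A B) h = g"
    using assms unfolding has_products_def by blast
  have e: "cdom C f = W" "ccod C f = A" "ccod C g = B" using assms unfolding hom_def by auto
  show ?thesis unfolding pair_def e by (rule theI'[OF ex])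
qed

lemma pair_unique:
  assumes "has_products C" "hom C f W A" "hom C g W B" "hom C k W (cprod C A B)"
    "ccomp C (cpr1 C A B) k = f" "ccomp C (cpr2 C A B) k = g"
  shows "k = pair C f g"
proof -
  have ex: "\<exists>!h. hom C h W (cprod C A B) \<and> ccomp C (cpr1 C A B) h = f \<and> ccomp C (cpr2 C A B) h = g"
    using assms unfolding has_products_def by blast
  then show ?thesis using pair_spec[OF assms(1-3)] assms(4-6) by blast
qed

lemma pr_homs: "has_products C \<Longrightarrow> hom C (cpr1 C A B) (cprod C A B) A \<and> hom C (cpr2 C A B) (cprod C A B) B"
  unfolding has_products_def by blast

lemma prodmap_spec:
  assumes "is_category C" "has_products C" "hom C f A A'" "hom C g B B'"
  shows "hom C (prodmap C f g) (cprod C A B) (cprod C A' B') \<and>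
         ccomp C (cpr1 C A' B') (prodmap C f g) = ccomp C f (cpr1 C A B) \<and>
         ccomp C (cpr2 C A' B') (prodmap C f g) = ccomp C g (cpr2 C A B)"
proof -
  have e: "cdom C f = A" "cdom C g = B" using assms unfolding hom_def by auto
  have h1: "hom C (ccomp C f (cpr1 C A B)) (cprod C A B) A'"
    using cat_comp[OF assms(1) _ assms(3)] pr_homs[OF assms(2)] by blast
  have h2: "hom C (ccomp C g (cpr2 C A B)) (cprod C A B) B'"
    using cat_comp[OF assms(1) _ assms(4)] pr_homs[OF assms(2)] by blast
  show ?thesis unfolding prodmap_def e using pair_spec[OF assms(2) h1 h2] by blast
qed


lemma pb_iso:
  assumes cat: "is_category C"
    and P: "is_pullback C u w Q q1 q2" and P': "is_pullback C u w Q' q1' q2'"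
  shows "\<exists>\<phi>. hom C \<phi> Q' Q \<and> is_iso C \<phi> \<and> ccomp C q1 \<phi> = q1'"
proof -
  have Ph: "hom C q1 Q (cdom C u)" "hom C q2 Q (cdom C w)" "ccomp C u q1 = ccomp C w q2"
    and Pu: "\<And>W a b. hom C a W (cdom C u) \<Longrightarrow> hom C b W (cdom C w) \<Longrightarrow> ccomp C u a = ccomp C w b \<Longrightarrow>
        (\<exists>!k. hom C k W Q \<and> ccomp C q1 k = a \<and> ccomp C q2 k = b)"
    using P unfolding is_pullback_def by blast+
  have Ph': "hom C q1' Q' (cdom C u)" "hom C q2' Q' (cdom C w)" "ccomp C u q1' = ccomp C w q2'"
    and Pu': "\<And>W a b. hom C a W (cdom C u) \<Longrightarrow> hom C b W (cdom C w) \<Longrightarrow> ccomp C u a = ccomp C w b \<Longrightarrow>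
        (\<exists>!k. hom C k W Q' \<and> ccomp C q1' k = a \<and> ccomp C q2' k = b)"
    using P' unfolding is_pullback_def by blast+
  obtain \<phi> where \<phi>: "hom C \<phi> Q' Q" "ccomp C q1 \<phi> = q1'" "ccomp C q2 \<phi> = q2'"
    using Pu[OF Ph'] by blast
  obtain \<psi> where \<psi>: "hom C \<psi> Q Q'" "ccomp C q1' \<psi> = q1" "ccomp C q2' \<psi> = q2"
    using Pu'[OF Ph] by blast
  have c1: "hom C (ccomp C \<psi> \<phi>) Q' Q'" using cat_comp[OF cat \<phi>(1) \<psi>(1)] .
  have c2: "hom C (ccomp C \<phi> \<psi>) Q Q" using cat_comp[OF cat \<psi>(1) \<phi>(1)] .
  have "ccomp C q1' (ccomp C \<psi> \<phi>) = q1'" using cat_assoc[OF cat \<phi>(1) \<psi>(1) Ph'(1)] \<psi> \<phi> by simp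
  moreover have "ccomp C q2' (ccomp C \<psi> \<phi>) = q2'" using cat_assoc[OF cat \<phi>(1) \<psi>(1) Ph'(2)] \<psi> \<phi> by simp
  moreover have "ccomp C q1' (cid C Q') = q1'" "ccomp C q2' (cid C Q') = q2'"
    using cat_idr[OF cat Ph'(1)] cat_idr[OF cat Ph'(2)] by auto
  ultimately have i1: "ccomp C \<psi> \<phi> = cid C Q'" using Pu'[OF Ph'] c1 cat_id[OF cat] by blast
  have "ccomp C q1 (ccomp C \<phi> \<psi>) = q1" using cat_assoc[OF cat \<psi>(1) \<phi>(1) Ph(1)] \<psi> \<phi> by simp
  moreover have "ccomp C q2 (ccomp C \<phi> \<psi>) = q2" using cat_assoc[OF cat \<psi>(1) \<phi>(1) Ph(2)] \<psi> \<phi> by simp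
  moreover have "ccomp C q1 (cid C Q) = q1" "ccomp C q2 (cid C Q) = q2"
    using cat_idr[OF cat Ph(1)] cat_idr[OF cat Ph(2)] by auto
  ultimately have i2: "ccomp C \<phi> \<psi> = cid C Q" using Pu[OF Ph] c2 cat_id[OF cat] by blast
  have "is_iso C \<phi>" unfolding is_iso_def using \<phi>(1) \<psi>(1) i1 i2 by (auto simp: hom_def)
  then show ?thesis using \<phi> by blast
qed


lemma P_parts0: assumes "P_category C"
  shows "is_category C" "has_products C" "functorial_path C"
   "(\<forall>f. is_iso C f \<longrightarrow> f \<in> fib C \<and> f \<in> we C)"
   "(\<forall>f g. cdom C g = ccod C f \<longrightarrow> f \<in> we C \<longrightarrow> g \<in> we C \<longrightarrow> ccomp C g f \<in> we C)"
   "(\<forall>f g. cdom C g = ccod C f \<longrightarrow> g \<in> we C \<longrightarrow> ccomp C g f \<in> we C \<longrightarrow> f \<in> we C)"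
   "(\<forall>A. iota C A \<in> we C \<and> pair C (d0 C A) (d1 C A) \<in> fib C \<and>
          d0 C A \<in> trivfib C \<and> d1 C A \<in> trivfib C)"
   "(\<forall>u v. ccod C u = ccod C v \<longrightarrow> v \<in> fib C \<longrightarrow>
        (\<exists>Q q1 q2. is_pullback C u v Q q1 q2 \<and> q1 \<in> fib C \<and>
           (v \<in> trivfib C \<longrightarrow> q1 \<in> trivfib C) \<and> (u \<in> we C \<longrightarrow> q2 \<in> we C)))"
   "(\<forall>f. f \<in> we C \<longrightarrow> Pa C f \<in> we C)"
   "(\<forall>v. v \<in> fib C \<longrightarrow>
        (\<forall>Q q1 q2 k. is_pullback C (prodmap C v v) (pair C (d0 C (ccod C v)) (d1 C (ccod C v))) Q q1 q2 \<longrightarrow>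
           hom C k (Po C (cdom C v)) Q \<longrightarrow>
           ccomp C q1 k = pair C (d0 C (cdom C v)) (d1 C (cdom C v)) \<longrightarrow>
           ccomp C q2 k = Pa C v \<longrightarrow> k \<in> fib C))"
  apply (insert assms[unfolded P_category_def])
  apply (elim conjE, assumption)+
  done

lemma P_parts: assumes "P_category C"
  shows "is_category C" "has_products C" "functorial_path C"
   "\<And>f. is_iso C f \<Longrightarrow> f \<in> we C"
   "\<And>f g. cdom C g = ccod C f \<Longrightarrow> f \<in> we C \<Longrightarrow> g \<in> we C \<Longrightarrow> ccomp C g f \<in> we C"
   "\<And>f g. cdom C g = ccod C f \<Longrightarrow> g \<in> we C \<Longrightarrow> ccomp C g f \<in> we C \<Longrightarrow> f \<in> we C"
   "\<And>A. pair C (d0 C A) (d1 C A) \<in> fib C"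
   "\<And>u v. ccod C u = ccod C v \<Longrightarrow> v \<in> fib C \<Longrightarrow>
        (\<exists>Q q1 q2. is_pullback C u v Q q1 q2 \<and> q1 \<in> fib C \<and>
           (v \<in> trivfib C \<longrightarrow> q1 \<in> trivfib C) \<and> (u \<in> we C \<longrightarrow> q2 \<in> we C))"
   "\<And>f. f \<in> we C \<Longrightarrow> Pa C f \<in> we C"
   "\<And>v Q q1 q2 k. v \<in> fib C \<Longrightarrow> is_pullback C (prodmap C v v) (pair C (d0 C (ccod C v)) (d1 C (ccod C v))) Q q1 q2 \<Longrightarrow>
           hom C k (Po C (cdom C v)) Q \<Longrightarrow>
           ccomp C q1 k = pair C (d0 C (cdom C v)) (d1 C (cdom C v)) \<Longrightarrow>
           ccomp C q2 k = Pa C v \<Longrightarrow> k \<in> fib C"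
  using P_parts0[OF assms] by simp_all

lemma v_times_id_we:
  assumes PC: "P_category C" and v: "v \<in> trivfib C" "hom C v A B"
  shows "prodmap C v (cid C Z) \<in> we C"
proof -
  note cat = P_parts(1)[OF PC] and prd = P_parts(2)[OF PC]
  note idZ = cat_id[OF cat, of Z]
  let ?u = "cpr1 C B Z"
  let ?m = "prodmap C v (cid C Z)"
  have pm: "hom C ?m (cprod C A Z) (cprod C B Z)" "ccomp C ?u ?m = ccomp C v (cpr1 C A Z)"
     "ccomp C (cpr2 C B Z) ?m = ccomp C (cid C Z) (cpr2 C A Z)"
    using prodmap_spec[OF cat prd v(2) idZ] by auto
  have prs: "hom C (cpr1 C A Z) (cprod C A Z) A" "hom C (cpr2 C A Z) (cprod C A Z) Z"
     "hom C (cpr1 C B Z) (cprod C B Z) B" "hom C (cpr2 C B Z) (cprod C B Z) Z"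
    using pr_homs[OF prd] by auto
  have dc: "cdom C ?u = cprod C B Z" "ccod C ?u = B" "cdom C v = A" "ccod C v = B"
    using prs v(2) by (auto simp: hom_def)
  have vfib: "v \<in> fib C" using v unfolding trivfib_def by auto
  obtain Q q1 q2 where Q: "is_pullback C ?u v Q q1 q2" "q1 \<in> trivfib C"
    using P_parts(8)[OF PC _ vfib, of ?u] dc v(1) by auto
  have PB: "is_pullback C ?u v (cprod C A Z) ?m (cpr1 C A Z)"
    unfolding is_pullback_def
  proof (intro conjI allI impI)
    show "ccod C ?u = ccod C v" using dc by simp
    show "hom C ?m (cprod C A Z) (cdom C ?u)" using pm(1) dc by simp
    show "hom C (cpr1 C A Z) (cprod C A Z) (cdom C v)" using prs(1) dc by simp
    show "ccomp C ?u ?m = ccomp C v (cpr1 C A Z)" by (rule pm(2))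
    fix W a b assume a0: "hom C a W (cdom C ?u)" and b0: "hom C b W (cdom C v)"
      and ab: "ccomp C ?u a = ccomp C v b"
    have a: "hom C a W (cprod C B Z)" and b: "hom C b W A" using a0 b0 dc by auto
    have a2: "hom C (ccomp C (cpr2 C B Z) a) W Z" using cat_comp[OF cat a prs(4)] .
    define k where "k = pair C b (ccomp C (cpr2 C B Z) a)"
    have k: "hom C k W (cprod C A Z)" "ccomp C (cpr1 C A Z) k = b"
        "ccomp C (cpr2 C A Z) k = ccomp C (cpr2 C B Z) a"
      using pair_spec[OF prd b a2] unfolding k_def by auto
    have "ccomp C ?u (ccomp C ?m k) = ccomp C ?u a"
      using cat_assoc[OF cat k(1) pm(1) prs(3)] cat_assoc[OF cat k(1) prs(1) v(2)] pm(2) k(2) ab by simp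
    moreover have "ccomp C (cpr2 C B Z) (ccomp C ?m k) = ccomp C (cpr2 C B Z) a"
      using cat_assoc[OF cat k(1) pm(1) prs(4)] cat_assoc[OF cat k(1) prs(2) idZ] pm(3) k(3)
        cat_idl[OF cat a2] by simp
    moreover have "hom C (ccomp C ?m k) W (cprod C B Z)" using cat_comp[OF cat k(1) pm(1)] .
    moreover have a1: "hom C (ccomp C ?u a) W B" using cat_comp[OF cat a prs(3)] .
    ultimately have mk: "ccomp C ?m k = a"
    proof -
      assume h: "ccomp C ?u (ccomp C ?m k) = ccomp C ?u a"
        "ccomp C (cpr2 C B Z) (ccomp C ?m k) = ccomp C (cpr2 C B Z) a"
        "hom C (ccomp C ?m k) W (cprod C B Z)" "hom C (ccomp C ?u a) W B"
      have "ccomp C ?m k = pair C (ccomp C ?u a) (ccomp C (cpr2 C B Z) a)"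
        by (rule pair_unique[OF prd a1 a2 h(3) h(1) h(2)])
      moreover have "a = pair C (ccomp C ?u a) (ccomp C (cpr2 C B Z) a)"
        by (rule pair_unique[OF prd a1 a2 a refl refl])
      ultimately show ?thesis by simp
    qed
    show "\<exists>!k. hom C k W (cprod C A Z) \<and> ccomp C ?m k = a \<and> ccomp C (cpr1 C A Z) k = b"
    proof (rule ex1I[of _ k])
      show "hom C k W (cprod C A Z) \<and> ccomp C ?m k = a \<and> ccomp C (cpr1 C A Z) k = b"
        using k mk by simp
      fix k' assume k': "hom C k' W (cprod C A Z) \<and> ccomp C ?m k' = a \<and> ccomp C (cpr1 C A Z) k' = b"
      have "ccomp C (cpr2 C A Z) k' = ccomp C (cpr2 C B Z) a"
        using k' cat_assoc[OF cat _ pm(1) prs(4), of k' W] cat_assoc[OF cat _ prs(2) idZ, of k' W] pm(3)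
          cat_idl[OF cat cat_comp[OF cat _ prs(2)], of k' W] by simp
      then have "k' = pair C b (ccomp C (cpr2 C B Z) a)"
        using pair_unique[OF prd b a2] k' by blast
      then show "k' = k" unfolding k_def .
    qed
  qed
  obtain \<phi> where \<phi>: "hom C \<phi> (cprod C A Z) Q" "is_iso C \<phi>" "ccomp C q1 \<phi> = ?m"
    using pb_iso[OF cat Q(1) PB] by blast
  have "ccod C \<phi> = cdom C q1" using \<phi>(1) Q(1) unfolding is_pullback_def hom_def by auto
  then show ?thesis using P_parts(5)[OF PC, of q1 \<phi>] P_parts(4)[OF PC \<phi>(2)] Q(2) \<phi>(3)
    unfolding trivfib_def by auto
qed

lemma id_times_v_we:
  assumes PC: "P_category C" and v: "v \<in> trivfib C" "hom C v A B"
  shows "prodmap C (cid C Z) v \<in> we C"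
proof -
  note cat = P_parts(1)[OF PC] and prd = P_parts(2)[OF PC]
  note idZ = cat_id[OF cat, of Z]
  let ?u = "cpr2 C Z B"
  let ?m = "prodmap C (cid C Z) v"
  have pm: "hom C ?m (cprod C Z A) (cprod C Z B)" "ccomp C ?u ?m = ccomp C v (cpr2 C Z A)"
     "ccomp C (cpr1 C Z B) ?m = ccomp C (cid C Z) (cpr1 C Z A)"
    using prodmap_spec[OF cat prd idZ v(2)] by auto
  have prs: "hom C (cpr2 C Z A) (cprod C Z A) A" "hom C (cpr1 C Z A) (cprod C Z A) Z"
     "hom C (cpr2 C Z B) (cprod C Z B) B" "hom C (cpr1 C Z B) (cprod C Z B) Z"
    using pr_homs[OF prd] by auto
  have dc: "cdom C ?u = cprod C Z B" "ccod C ?u = B" "cdom C v = A" "ccod C v = B"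
    using prs v(2) by (auto simp: hom_def)
  have vfib: "v \<in> fib C" using v unfolding trivfib_def by auto
  obtain Q q1 q2 where Q: "is_pullback C ?u v Q q1 q2" "q1 \<in> trivfib C"
    using P_parts(8)[OF PC _ vfib, of ?u] dc v(1) by auto
  have PB: "is_pullback C ?u v (cprod C Z A) ?m (cpr2 C Z A)"
    unfolding is_pullback_def
  proof (intro conjI allI impI)
    show "ccod C ?u = ccod C v" using dc by simp
    show "hom C ?m (cprod C Z A) (cdom C ?u)" using pm(1) dc by simp
    show "hom C (cpr2 C Z A) (cprod C Z A) (cdom C v)" using prs(1) dc by simp
    show "ccomp C ?u ?m = ccomp C v (cpr2 C Z A)" by (rule pm(2))
    fix W a b assume a0: "hom C a W (cdom C ?u)" and b0: "hom C b W (cdom C v)"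
      and ab: "ccomp C ?u a = ccomp C v b"
    have a: "hom C a W (cprod C Z B)" and b: "hom C b W A" using a0 b0 dc by auto
    have a2: "hom C (ccomp C (cpr1 C Z B) a) W Z" using cat_comp[OF cat a prs(4)] .
    define k where "k = pair C (ccomp C (cpr1 C Z B) a) b"
    have k: "hom C k W (cprod C Z A)" "ccomp C (cpr2 C Z A) k = b"
        "ccomp C (cpr1 C Z A) k = ccomp C (cpr1 C Z B) a"
      using pair_spec[OF prd a2 b] unfolding k_def by auto
    have "ccomp C ?u (ccomp C ?m k) = ccomp C ?u a"
      using cat_assoc[OF cat k(1) pm(1) prs(3)] cat_assoc[OF cat k(1) prs(1) v(2)] pm(2) k(2) ab by simp
    moreover have "ccomp C (cpr1 C Z B) (ccomp C ?m k) = ccomp C (cpr1 C Z B) a"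
      using cat_assoc[OF cat k(1) pm(1) prs(4)] cat_assoc[OF cat k(1) prs(2) idZ] pm(3) k(3)
        cat_idl[OF cat a2] by simp
    moreover have "hom C (ccomp C ?m k) W (cprod C Z B)" using cat_comp[OF cat k(1) pm(1)] .
    moreover have a1: "hom C (ccomp C ?u a) W B" using cat_comp[OF cat a prs(3)] .
    ultimately have mk: "ccomp C ?m k = a"
    proof -
      assume h: "ccomp C ?u (ccomp C ?m k) = ccomp C ?u a"
        "ccomp C (cpr1 C Z B) (ccomp C ?m k) = ccomp C (cpr1 C Z B) a"
        "hom C (ccomp C ?m k) W (cprod C Z B)" "hom C (ccomp C ?u a) W B"
      have "ccomp C ?m k = pair C (ccomp C (cpr1 C Z B) a) (ccomp C ?u a)"
        by (rule pair_unique[OF prd a2 a1 h(3) h(2) h(1)])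
      moreover have "a = pair C (ccomp C (cpr1 C Z B) a) (ccomp C ?u a)"
        by (rule pair_unique[OF prd a2 a1 a refl refl])
      ultimately show ?thesis by simp
    qed
    show "\<exists>!k. hom C k W (cprod C Z A) \<and> ccomp C ?m k = a \<and> ccomp C (cpr2 C Z A) k = b"
    proof (rule ex1I[of _ k])
      show "hom C k W (cprod C Z A) \<and> ccomp C ?m k = a \<and> ccomp C (cpr2 C Z A) k = b"
        using k mk by simp
      fix k' assume k': "hom C k' W (cprod C Z A) \<and> ccomp C ?m k' = a \<and> ccomp C (cpr2 C Z A) k' = b"
      have "ccomp C (cpr1 C Z A) k' = ccomp C (cpr1 C Z B) a"
        using k' cat_assoc[OF cat _ pm(1) prs(4), of k' W] cat_assoc[OF cat _ prs(2) idZ, of k' W] pm(3)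
          cat_idl[OF cat cat_comp[OF cat _ prs(2)], of k' W] by simp
      then have "k' = pair C (ccomp C (cpr1 C Z B) a) b"
        using pair_unique[OF prd a2 b] k' by blast
      then show "k' = k" unfolding k_def .
    qed
  qed
  obtain \<phi> where \<phi>: "hom C \<phi> (cprod C Z A) Q" "is_iso C \<phi>" "ccomp C q1 \<phi> = ?m"
    using pb_iso[OF cat Q(1) PB] by blast
  have "ccod C \<phi> = cdom C q1" using \<phi>(1) Q(1) unfolding is_pullback_def hom_def by auto
  then show ?thesis using P_parts(5)[OF PC, of q1 \<phi>] P_parts(4)[OF PC \<phi>(2)] Q(2) \<phi>(3)
    unfolding trivfib_def by auto
qed


lemma vv_we:
  assumes PC: "P_category C" and v: "v \<in> trivfib C" "hom C v A B"
  shows "prodmap C v v \<in> we C"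
proof -
  note cat = P_parts(1)[OF PC] and prd = P_parts(2)[OF PC]
  note idA = cat_id[OF cat, of A] and idB = cat_id[OF cat, of B]
  let ?x = "prodmap C v (cid C B)" and ?y = "prodmap C (cid C A) v"
  have x: "hom C ?x (cprod C A B) (cprod C B B)" "ccomp C (cpr1 C B B) ?x = ccomp C v (cpr1 C A B)"
     "ccomp C (cpr2 C B B) ?x = ccomp C (cid C B) (cpr2 C A B)"
    using prodmap_spec[OF cat prd v(2) idB] by auto
  have y: "hom C ?y (cprod C A A) (cprod C A B)" "ccomp C (cpr1 C A B) ?y = ccomp C (cid C A) (cpr1 C A A)"
     "ccomp C (cpr2 C A B) ?y = ccomp C v (cpr2 C A A)"
    using prodmap_spec[OF cat prd idA v(2)] by auto
  have z: "hom C (prodmap C v v) (cprod C A A) (cprod C B B)" "ccomp C (cpr1 C B B) (prodmap C v v) = ccomp C v (cpr1 C A A)"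
     "ccomp C (cpr2 C B B) (prodmap C v v) = ccomp C v (cpr2 C A A)"
    using prodmap_spec[OF cat prd v(2) v(2)] by auto
  have prs: "hom C (cpr1 C A A) (cprod C A A) A" "hom C (cpr2 C A A) (cprod C A A) A"
     "hom C (cpr1 C A B) (cprod C A B) A" "hom C (cpr2 C A B) (cprod C A B) B"
     "hom C (cpr1 C B B) (cprod C B B) B" "hom C (cpr2 C B B) (cprod C B B) B"
    using pr_homs[OF prd] by auto
  have h1: "hom C (ccomp C v (cpr1 C A A)) (cprod C A A) B" using cat_comp[OF cat prs(1) v(2)] .
  have h2: "hom C (ccomp C v (cpr2 C A A)) (cprod C A A) B" using cat_comp[OF cat prs(2) v(2)] .
  have xy: "hom C (ccomp C ?x ?y) (cprod C A A) (cprod C B B)" using cat_comp[OF cat y(1) x(1)] .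
  have c1: "ccomp C (cpr1 C B B) (ccomp C ?x ?y) = ccomp C v (cpr1 C A A)"
    using cat_assoc[OF cat y(1) x(1) prs(5)] x(2) cat_assoc[OF cat y(1) prs(3) v(2)] y(2)
      cat_idl[OF cat prs(1)] by simp
  have c2: "ccomp C (cpr2 C B B) (ccomp C ?x ?y) = ccomp C v (cpr2 C A A)"
    using cat_assoc[OF cat y(1) x(1) prs(6)] x(3) cat_assoc[OF cat y(1) prs(4) idB] y(3)
      cat_idl[OF cat h2] by simp
  have "ccomp C ?x ?y = prodmap C v v"
    using pair_unique[OF prd h1 h2 xy c1 c2] pair_unique[OF prd h1 h2 z(1) z(2) z(3)] by simp
  moreover have "ccomp C ?x ?y \<in> we C"
    using P_parts(5)[OF PC] v_times_id_we[OF PC v] id_times_v_we[OF PC v] x(1) y(1)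
    by (simp add: hom_def)
  ultimately show ?thesis by simp
qed

theorem lemma2p21:
  fixes C :: "('o, 'a) pcat"
  assumes "P_category C"
    and "cofibrant C X"
    and "v \<in> trivfib C" and "hom C v A B"
    and "hom C f0 X A" and "hom C f1 X A"
    and "hom C h X (Po C B)"
    and "ccomp C (pair C (d0 C B) (d1 C B)) h = pair C (ccomp C v f0) (ccomp C v f1)"
  shows "\<exists>h'. hom C h' X (Po C A) \<and>
           ccomp C (pair C (d0 C A) (d1 C A)) h' = pair C f0 f1 \<and>
           ccomp C (Pa C v) h' = h"
proof -
  note PC = assms(1) and v = assms(3,4)
  note cat = P_parts(1)[OF PC] and prd = P_parts(2)[OF PC] and fp = P_parts(3)[OF PC]
  have dv: "cdom C v = A" "ccod C v = B" using v(2) by (auto simp: hom_def)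
  have vfib: "v \<in> fib C" and vwe: "v \<in> we C" using v(1) unfolding trivfib_def by auto
  have d: "\<And>Y. hom C (d0 C Y) (Po C Y) Y \<and> hom C (d1 C Y) (Po C Y) Y"
    using fp unfolding functorial_path_def by blast
  have nat0: "ccomp C (d0 C B) (Pa C v) = ccomp C v (d0 C A)"
    and nat1: "ccomp C (d1 C B) (Pa C v) = ccomp C v (d1 C A)"
    using fp dv unfolding functorial_path_def by metis+
  have Pv: "hom C (Pa C v) (Po C A) (Po C B)"
    using fp dv unfolding functorial_path_def is_functor_P_def by metis
  have pA: "hom C (pair C (d0 C A) (d1 C A)) (Po C A) (cprod C A A)"
    "ccomp C (cpr1 C A A) (pair C (d0 C A) (d1 C A)) = d0 C A"
    "ccomp C (cpr2 C A A) (pair C (d0 C A) (d1 C A)) = d1 C A"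
    using pair_spec[OF prd, of "d0 C A" "Po C A" A "d1 C A" A] d by auto
  have pB: "hom C (pair C (d0 C B) (d1 C B)) (Po C B) (cprod C B B)"
    "ccomp C (cpr1 C B B) (pair C (d0 C B) (d1 C B)) = d0 C B"
    "ccomp C (cpr2 C B B) (pair C (d0 C B) (d1 C B)) = d1 C B"
    using pair_spec[OF prd, of "d0 C B" "Po C B" B "d1 C B" B] d by auto
  have z: "hom C (prodmap C v v) (cprod C A A) (cprod C B B)" "ccomp C (cpr1 C B B) (prodmap C v v) = ccomp C v (cpr1 C A A)"
     "ccomp C (cpr2 C B B) (prodmap C v v) = ccomp C v (cpr2 C A A)"
    using prodmap_spec[OF cat prd v(2) v(2)] by auto
  have prs: "hom C (cpr1 C A A) (cprod C A A) A" "hom C (cpr2 C A A) (cprod C A A) A"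
     "hom C (cpr1 C B B) (cprod C B B) B" "hom C (cpr2 C B B) (cprod C B B) B"
    using pr_homs[OF prd] by auto
  have cc: "ccod C (prodmap C v v) = ccod C (pair C (d0 C B) (d1 C B))" using z(1) pB(1) by (simp add: hom_def)
  obtain Q q1 q2 where Q: "is_pullback C (prodmap C v v) (pair C (d0 C B) (d1 C B)) Q q1 q2" "q2 \<in> we C"
    using P_parts(8)[OF PC cc P_parts(7)[OF PC]] vv_we[OF PC v] by blast
  have Qh: "hom C q1 Q (cprod C A A)" "hom C q2 Q (Po C B)"
    and Qu: "\<And>W a b. hom C a W (cprod C A A) \<Longrightarrow> hom C b W (Po C B) \<Longrightarrow>
        ccomp C (prodmap C v v) a = ccomp C (pair C (d0 C B) (d1 C B)) b \<Longrightarrow>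
        (\<exists>!k. hom C k W Q \<and> ccomp C q1 k = a \<and> ccomp C q2 k = b)"
    using Q(1) z(1) pB(1) unfolding is_pullback_def by (auto simp: hom_def)
  have e1: "hom C (ccomp C (prodmap C v v) (pair C (d0 C A) (d1 C A))) (Po C A) (cprod C B B)"
    using cat_comp[OF cat pA(1) z(1)] .
  have e2: "hom C (ccomp C (pair C (d0 C B) (d1 C B)) (Pa C v)) (Po C A) (cprod C B B)"
    using cat_comp[OF cat Pv pB(1)] .
  have g0: "hom C (ccomp C v (d0 C A)) (Po C A) B" using cat_comp[OF cat _ v(2)] d by blast
  have g1: "hom C (ccomp C v (d1 C A)) (Po C A) B" using cat_comp[OF cat _ v(2)] d by blast
  have "ccomp C (cpr1 C B B) (ccomp C (prodmap C v v) (pair C (d0 C A) (d1 C A))) = ccomp C v (d0 C A)"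
    using cat_assoc[OF cat pA(1) z(1) prs(3)] z(2) cat_assoc[OF cat pA(1) prs(1) v(2)] pA(2) by simp
  moreover have "ccomp C (cpr2 C B B) (ccomp C (prodmap C v v) (pair C (d0 C A) (d1 C A))) = ccomp C v (d1 C A)"
    using cat_assoc[OF cat pA(1) z(1) prs(4)] z(3) cat_assoc[OF cat pA(1) prs(2) v(2)] pA(3) by simp
  moreover have "ccomp C (cpr1 C B B) (ccomp C (pair C (d0 C B) (d1 C B)) (Pa C v)) = ccomp C v (d0 C A)"
    using cat_assoc[OF cat Pv pB(1) prs(3)] pB(2) nat0 by simp
  moreover have "ccomp C (cpr2 C B B) (ccomp C (pair C (d0 C B) (d1 C B)) (Pa C v)) = ccomp C v (d1 C A)"
    using cat_assoc[OF cat Pv pB(1) prs(4)] pB(3) nat1 by simp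
  ultimately have comm: "ccomp C (prodmap C v v) (pair C (d0 C A) (d1 C A)) = ccomp C (pair C (d0 C B) (d1 C B)) (Pa C v)"
    using pair_unique[OF prd g0 g1 e1] pair_unique[OF prd g0 g1 e2] by simp
  obtain k where k: "hom C k (Po C A) Q" "ccomp C q1 k = pair C (d0 C A) (d1 C A)" "ccomp C q2 k = Pa C v"
    using Qu[OF pA(1) Pv comm] by blast
  have kfib: "k \<in> fib C"
    using P_parts(10)[OF PC vfib, of Q q1 q2 k] Q(1) k dv by simp
  have kwe: "k \<in> we C"
  proof (rule P_parts(6)[OF PC])
    show "cdom C q2 = ccod C k" using k(1) Qh(2) by (simp add: hom_def)
    show "q2 \<in> we C" by (rule Q(2))
    show "ccomp C q2 k \<in> we C" using k(3) P_parts(9)[OF PC vwe] by simp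
  qed
  have pf: "hom C (pair C f0 f1) X (cprod C A A)" "ccomp C (cpr1 C A A) (pair C f0 f1) = f0"
      "ccomp C (cpr2 C A A) (pair C f0 f1) = f1"
    using pair_spec[OF prd assms(5,6)] by auto
  have vf0: "hom C (ccomp C v f0) X B" using cat_comp[OF cat assms(5) v(2)] .
  have vf1: "hom C (ccomp C v f1) X B" using cat_comp[OF cat assms(6) v(2)] .
  have e3: "hom C (ccomp C (prodmap C v v) (pair C f0 f1)) X (cprod C B B)" using cat_comp[OF cat pf(1) z(1)] .
  have "ccomp C (cpr1 C B B) (ccomp C (prodmap C v v) (pair C f0 f1)) = ccomp C v f0"
    using cat_assoc[OF cat pf(1) z(1) prs(3)] z(2) cat_assoc[OF cat pf(1) prs(1) v(2)] pf(2) by simp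
  moreover have "ccomp C (cpr2 C B B) (ccomp C (prodmap C v v) (pair C f0 f1)) = ccomp C v f1"
    using cat_assoc[OF cat pf(1) z(1) prs(4)] z(3) cat_assoc[OF cat pf(1) prs(2) v(2)] pf(3) by simp
  ultimately have comm2: "ccomp C (prodmap C v v) (pair C f0 f1) = ccomp C (pair C (d0 C B) (d1 C B)) h"
    using pair_unique[OF prd vf0 vf1 e3] assms(8) by simp
  obtain m where m: "hom C m X Q" "ccomp C q1 m = pair C f0 f1" "ccomp C q2 m = h"
    using Qu[OF pf(1) assms(7) comm2] by blast
  have ktf: "k \<in> trivfib C" using kfib kwe unfolding trivfib_def by simp
  obtain g where g: "hom C g X (cdom C k)" "ccomp C k g = m"
  proof -
    have "hom C m X (ccod C k)" using m(1) k(1) by (simp add: hom_def)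
    then show ?thesis using assms(2) ktf that unfolding cofibrant_def by blast
  qed
  have g': "hom C g X (Po C A)" using g(1) k(1) by (simp add: hom_def)
  have "ccomp C (pair C (d0 C A) (d1 C A)) g = pair C f0 f1"
    using cat_assoc[OF cat g' k(1) Qh(1)] k(2) g(2) m(2) by simp
  moreover have "ccomp C (Pa C v) g = h"
    using cat_assoc[OF cat g' k(1) Qh(2)] k(3) g(2) m(3) by simp
  ultimately show ?thesis using g' by blast
qed

end
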